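(* Let $\hat\lambda\in\mathbb{R}$ and $\lambda\in\mathbb{R}\cup\{+\infty\}$ satisfy $0\le\hat\lambda\le1$, $\tfrac12<\lambda\le+\infty$ and $\hat\lambda^2/(1-\hat\lambda)\le\lambda$. Then there exist $q_0\ge0$ and a $3$-system $\mathbf{P}=(P_1,P_2,P_3)$ on $[q_0,+\infty)$ such that $\lim_{q\to\infty}P_1(q)=+\infty$, $\overline{\varphi}(P_3)=\lambda/(1+\lambda)$ (interpreted as $1$ when $\lambda=+\infty$) and $\kappa(P_3)=\hat\lambda/(1+\hat\lambda)$.
   Context: A $3$-system on $[q_0,+\infty)$ is a continuous piecewise linear map $\mathbf{P}=(P_1,P_2,P_3):[q_0,+\infty)\to\mathbb{R}^3$ such that: (1) for each $q\ge q_0$, $0\le P_1(q)\le P_2(q)\le P_3(q)$ and $P_1(q)+P_2(q)+P_3(q)=q$; (2) on each non-empty open subinterval where $\mathbf{P}$ is differentiable, there is $r\in\{1,2,3\}$ such that $P_r$ has slope $1$ and the other components are constant; (3) if $q>q_0$ is a point where $\mathbf{P}$ is not differentiable and $P_r$ has slope $1$ just to the left of $q$ and $P_s$ has slope $1$ just to the right, with $r<s$, then $P_r(q)=P_{r+1}(q)=\cdots=P_s(q)$. For an unbounded continuous piecewise linear $P$ with slopes $0,1$ changing from slope $1$ to $0$ infinitely often: $(q_i)$ is the increasing sequence of abscissas where the slope changes from $1$ to $0$; $\overline{\varphi}(P)=\limsup_{q\to\infty}P(q)/q$; for $\alpha<\overline\varphi(P)$, $(q_{i,\alpha})_i$ is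 the increasing subsequence of the $q_k$ with $P(q_k)/q_k\ge\alpha$, $r_{i,\alpha}=q_{i+1,\alpha}-P(q_{i+1,\alpha})+P(q_{i,\alpha})$, $\kappa_\alpha(P)=\liminf_i P(q_{i,\alpha})/r_{i,\alpha}$, and $\kappa(P)=\lim_{\alpha\to\overline\varphi(P)^-}\kappa_\alpha(P)$. *)

theory Defs
  imports Complex_Main "HOL-Library.Extended_Real" "HOL-Library.Liminf_Limsup"
begin

definition sys_comp :: "(real \<Rightarrow> real) \<Rightarrow> (real \<Rightarrow> real) \<Rightarrow> (real \<Rightarrow> real) \<Rightarrow> nat \<Rightarrow> real \<Rightarrow> real" where
  "sys_comp P1 P2 P3 j = (if j = 1 then P1 else if j = 2 then P2 else P3)"

text \<open>A 3-system on [q0, +infinity).  Continuous piecewise linear is encoded by a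
  subdivision q0 = t 0 < t 1 < ... tending to infinity such that on each closed piece
  [t k, t (k+1)] the component r k has slope 1 and the others are constant
  (consecutive pieces agree at common endpoints, so the map is continuous).
  Condition (3) is imposed at each subdivision point where the moving component changes.\<close>
definition three_system :: "real \<Rightarrow> (real \<Rightarrow> real) \<Rightarrow> (real \<Rightarrow> real) \<Rightarrow> (real \<Rightarrow> real) \<Rightarrow> bool" where
  "three_system q0 P1 P2 P3 \<longleftrightarrow>
     (\<forall>q\<ge>q0. 0 \<le> P1 q \<and> P1 q \<le> P2 q \<and> P2 q \<le> P3 q \<and> P1 q + P2 q + P3 q = q) \<and>
     (\<exists>(t::nat \<Rightarrow> real) (r::nat \<Rightarrow> nat).
        t 0 = q0 \<and> strict_mono t \<and> filterlim t at_top sequentially \<and>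
        (\<forall>k. r k \<in> {1,2,3} \<and>
           (\<forall>q. t k \<le> q \<and> q \<le> t (Suc k) \<longrightarrow>
              (\<forall>j\<in>{1,2,3}. sys_comp P1 P2 P3 j q =
                 sys_comp P1 P2 P3 j (t k) + (if j = r k then q - t k else 0)))) \<and>
        (\<forall>k. r k < r (Suc k) \<longrightarrow>
           (\<forall>j. r k \<le> j \<and> j \<le> r (Suc k) \<longrightarrow>
              sys_comp P1 P2 P3 j (t (Suc k)) = sys_comp P1 P2 P3 (r k) (t (Suc k)))))"

definition switch_pts :: "real \<Rightarrow> (real \<Rightarrow> real) \<Rightarrow> real set" where
  "switch_pts q0 P = {q. q > q0 \<and>
      (\<exists>e>0. \<forall>x. q - e \<le> x \<and> x \<le> q \<longrightarrow> P x = P q - (q - x)) \<and>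
      (\<exists>e>0. \<forall>x. q \<le> x \<and> x \<le> q + e \<longrightarrow> P x = P q)}"

text \<open>Increasing enumeration of a (locally finite, bounded below) set of reals.\<close>
primrec enum_real :: "real set \<Rightarrow> nat \<Rightarrow> real" where
  "enum_real S 0 = Inf S"
| "enum_real S (Suc n) = Inf {x \<in> S. x > enum_real S n}"

definition phibar :: "(real \<Rightarrow> real) \<Rightarrow> ereal" where
  "phibar P = Limsup at_top (\<lambda>q. ereal (P q / q))"

definition q_alpha :: "real \<Rightarrow> (real \<Rightarrow> real) \<Rightarrow> real \<Rightarrow> nat \<Rightarrow> real" where
  "q_alpha q0 P \<alpha> = enum_real {q \<in> switch_pts q0 P. P q / q \<ge> \<alpha>}"

definition r_alpha :: "real \<Rightarrow> (real \<Rightarrow> real) \<Rightarrow> real \<Rightarrow> nat \<Rightarrow> real" where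
  "r_alpha q0 P \<alpha> i = q_alpha q0 P \<alpha> (Suc i) - P (q_alpha q0 P \<alpha> (Suc i)) + P (q_alpha q0 P \<alpha> i)"

definition kappa_alpha :: "real \<Rightarrow> (real \<Rightarrow> real) \<Rightarrow> real \<Rightarrow> ereal" where
  "kappa_alpha q0 P \<alpha> = Liminf sequentially (\<lambda>i. ereal (P (q_alpha q0 P \<alpha> i) / r_alpha q0 P \<alpha> i))"

definition has_kappa :: "real \<Rightarrow> (real \<Rightarrow> real) \<Rightarrow> ereal \<Rightarrow> bool" where
  "has_kappa q0 P k \<longleftrightarrow> ((\<lambda>\<alpha>. kappa_alpha q0 P \<alpha>) \<longlongrightarrow> k) (at_left (real_of_ereal (phibar P)))"

end

theory Submission
  imports Defs
begin

definition sst :: "(nat \<Rightarrow> real) \<Rightarrow> (nat \<Rightarrow> real) \<Rightarrow> (nat \<Rightarrow> real) \<Rightarrow> nat \<Rightarrow> nat \<Rightarrow> real" where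
"sst A B C s j = (if j = 1 then (if s mod 4 \<le> 1 then A (s div 4) else A (Suc (s div 4)))
   else if j = 2 then (if s mod 4 = 0 then B (s div 4) else if s mod 4 \<le> 2 then A (Suc (s div 4)) else C (s div 4))
   else C (s div 4))"

definition mv :: "nat \<Rightarrow> nat" where "mv s = (if s mod 4 = 1 then 1 else if s mod 4 = 3 then 3 else 2)"

definition tt :: "(nat \<Rightarrow> real) \<Rightarrow> (nat \<Rightarrow> real) \<Rightarrow> (nat \<Rightarrow> real) \<Rightarrow> nat \<Rightarrow> real" where
 "tt A B C s = sst A B C s 1 + sst A B C s 2 + sst A B C s 3"

definition idx :: "(nat \<Rightarrow> real) \<Rightarrow> (nat \<Rightarrow> real) \<Rightarrow> (nat \<Rightarrow> real) \<Rightarrow> real \<Rightarrow> nat" where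
  "idx A B C q = (LEAST s. q < tt A B C (Suc s))"

definition PP :: "(nat \<Rightarrow> real) \<Rightarrow> (nat \<Rightarrow> real) \<Rightarrow> (nat \<Rightarrow> real) \<Rightarrow> nat \<Rightarrow> real \<Rightarrow> real" where
  "PP A B C j q = sst A B C (idx A B C q) j + (if j = mv (idx A B C q) then q - tt A B C (idx A B C q) else 0)"

lemma s_cases:
  fixes s :: nat
  obtains "s mod 4 = 0" | "s mod 4 = 1" | "s mod 4 = 2" | "s mod 4 = 3"
proof -
  have "s mod 4 < 4" by simp
  then have "s mod 4 = 0 \<or> s mod 4 = 1 \<or> s mod 4 = 2 \<or> s mod 4 = 3" by linarith
  then show ?thesis using that by auto
qed

lemma suc_mod:
  fixes s :: nat
  shows "s mod 4 = 0 \<Longrightarrow> Suc s mod 4 = 1 \<and> Suc s div 4 = s div 4"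
    and "s mod 4 = 1 \<Longrightarrow> Suc s mod 4 = 2 \<and> Suc s div 4 = s div 4"
    and "s mod 4 = 2 \<Longrightarrow> Suc s mod 4 = 3 \<and> Suc s div 4 = s div 4"
    and "s mod 4 = 3 \<Longrightarrow> Suc s mod 4 = 0 \<and> Suc s div 4 = Suc (s div 4)"
  by presburger+

lemma tt0: "tt A B C (4*n) = A n + B n + C n" by (simp add: tt_def sst_def)

locale blocks =
  fixes A B C :: "nat \<Rightarrow> real"
  assumes A0: "0 \<le> A 0" and A0B0: "A 0 \<le> B 0"
  and BA: "\<And>n. B n < A (Suc n)" and AC: "\<And>n. A (Suc n) < C n"
  and BC: "\<And>n. B (Suc n) = C n" and CC: "\<And>n. C n < C (Suc n)"
  and Cinf: "filterlim C at_top sequentially"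
begin

abbreviation "st \<equiv> sst A B C"
abbreviation "T \<equiv> tt A B C"
abbreviation "P \<equiv> PP A B C"

lemma nonneg: "0 \<le> A n \<and> 0 \<le> B n \<and> A n \<le> B n \<and> B n \<le> C n"
proof (induction n)
  case 0 then show ?case using A0 A0B0 BA[of 0] AC[of 0] by auto
next
  case (Suc n) then show ?case using BA[of n] AC[of n] BC[of n] CC[of n] by auto
qed

lemma step: assumes "j \<in> {1,2,3}"
  shows "st (Suc s) j = st s j + (if j = mv s then T (Suc s) - T s else 0)"
proof (cases s rule: s_cases)
  case 1 then show ?thesis using suc_mod(1)[OF 1] assms by (auto simp: sst_def mv_def tt_def)
next
  case 2 then show ?thesis using suc_mod(2)[OF 2] assms by (auto simp: sst_def mv_def tt_def)
next
  case 3 then show ?thesis using suc_mod(3)[OF 3] assms by (auto simp: sst_def mv_def tt_def)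
next
  case 4 then show ?thesis using suc_mod(4)[OF 4] assms by (auto simp: sst_def mv_def tt_def BC)
qed

lemma order: "0 \<le> st s 1 \<and> st s 1 \<le> st s 2 \<and> st s 2 \<le> st s 3"
  using nonneg[of "s div 4"] BA[of "s div 4"] AC[of "s div 4"]
  by (cases s rule: s_cases) (auto simp: sst_def)

lemma len_pos: "T s < T (Suc s)"
proof (cases s rule: s_cases)
  case 1 then show ?thesis using suc_mod(1)[OF 1] BA[of "s div 4"] by (auto simp: sst_def tt_def)
next
  case 2 then show ?thesis using suc_mod(2)[OF 2] BA[of "s div 4"] nonneg[of "s div 4"] by (auto simp: sst_def tt_def)
next
  case 3 then show ?thesis using suc_mod(3)[OF 3] AC[of "s div 4"] by (auto simp: sst_def tt_def)
next
  case 4 then show ?thesis using suc_mod(4)[OF 4] CC[of "s div 4"] BC[of "s div 4"] by (auto simp: sst_def tt_def)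
qed

lemma T_mono: "strict_mono T"
  using len_pos by (simp add: strict_mono_Suc_iff)

lemma T_ge_C: "C (s div 4) \<le> T s"
proof -
  have "st s 3 = C (s div 4)" by (simp add: sst_def)
  then show ?thesis using order[of s] by (simp add: tt_def)
qed

lemma T_inf: "filterlim T at_top sequentially"
proof (rule filterlim_at_top_mono[OF _ ])
  show "filterlim (\<lambda>s. C (s div 4)) at_top sequentially"
  proof -
    have "filterlim (\<lambda>s::nat. s div 4) at_top sequentially"
      unfolding filterlim_at_top
    proof
      fix Z :: nat
      show "eventually (\<lambda>s. Z \<le> s div 4) sequentially"
        unfolding eventually_sequentially by (rule exI[of _ "4*Z"]) auto
    qed
    then show ?thesis using filterlim_compose[OF Cinf] by blast
  qed
  show "eventually (\<lambda>s. C (s div 4) \<le> T s) sequentially" using T_ge_C by simp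
qed

lemma idx_eq: assumes "T k \<le> q" "q < T (Suc k)" shows "idx A B C q = k"
  unfolding idx_def
proof (rule Least_equality)
  show "q < T (Suc k)" by fact
  fix y assume "q < T (Suc y)"
  show "k \<le> y"
  proof (rule ccontr)
    assume "\<not> k \<le> y"
    then have "Suc y \<le> k" by simp
    then have "T (Suc y) \<le> T k" using T_mono by (simp add: strict_mono_less_eq)
    then show False using assms \<open>q < T (Suc y)\<close> by simp
  qed
qed

lemma idx_ex: assumes "T 0 \<le> q" shows "T (idx A B C q) \<le> q \<and> q < T (Suc (idx A B C q))"
proof -
  have "eventually (\<lambda>s. q < T s) sequentially"
    using T_inf by (simp add: filterlim_at_top_dense)
  then obtain s0 where "\<forall>s\<ge>s0. q < T s" by (auto simp: eventually_sequentially)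
  then have ex: "q < T (Suc s0)" by simp
  have 1: "q < T (Suc (idx A B C q))" unfolding idx_def by (rule LeastI[of _ s0]) (rule ex)
  have 2: "T (idx A B C q) \<le> q"
  proof (cases "idx A B C q")
    case 0 then show ?thesis using assms by simp
  next
    case (Suc m)
    have "\<not> q < T (Suc m)"
    proof
      assume "q < T (Suc m)"
      then have "idx A B C q \<le> m" unfolding idx_def by (rule Least_le)
      then show False using Suc by simp
    qed
    then show ?thesis using Suc by simp
  qed
  show ?thesis using 1 2 by simp
qed

lemma P_seg: assumes "T k \<le> q" "q \<le> T (Suc k)" "j \<in> {1,2,3}"
  shows "P j q = st k j + (if j = mv k then q - T k else 0)"
proof (cases "q < T (Suc k)")
  case True
  then show ?thesis using idx_eq[OF assms(1) True] by (simp add: PP_def)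
next
  case False
  then have q: "q = T (Suc k)" using assms by simp
  have "idx A B C q = Suc k" using q len_pos[of "Suc k"] by (intro idx_eq) auto
  then show ?thesis using q step[OF assms(3), of k] by (simp add: PP_def)
qed

lemma P_at: "j \<in> {1,2,3} \<Longrightarrow> P j (T k) = st k j"
  using P_seg[of k "T k" j] len_pos[of k] by simp

lemma sc: "j \<in> {1,2,3} \<Longrightarrow> sys_comp (P 1) (P 2) (P 3) j = P j"
  by (auto simp: sys_comp_def)

lemma ordered: assumes "T 0 \<le> q"
  shows "0 \<le> P 1 q \<and> P 1 q \<le> P 2 q \<and> P 2 q \<le> P 3 q \<and> P 1 q + P 2 q + P 3 q = q"
proof -
  define k where "k = idx A B C q"
  have kq: "T k \<le> q" "q < T (Suc k)" using idx_ex[OF assms] by (auto simp: k_def)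
  have e: "\<And>j. j \<in> {1,2,3} \<Longrightarrow> P j q = st k j + (if j = mv k then q - T k else 0)"
    using P_seg kq by simp
  have s: "\<And>j. j \<in> {1,2,3} \<Longrightarrow> st (Suc k) j = st k j + (if j = mv k then T (Suc k) - T k else 0)"
    using step by simp
  have o1: "0 \<le> st k 1 \<and> st k 1 \<le> st k 2 \<and> st k 2 \<le> st k 3" using order by simp
  have o2: "0 \<le> st (Suc k) 1 \<and> st (Suc k) 1 \<le> st (Suc k) 2 \<and> st (Suc k) 2 \<le> st (Suc k) 3" using order by simp
  have mvk: "mv k = 1 \<or> mv k = 2 \<or> mv k = 3" by (simp add: mv_def)
  have sum: "P 1 q + P 2 q + P 3 q = q"
  proof -
    have "P 1 q + P 2 q + P 3 q = st k 1 + st k 2 + st k 3 + (q - T k)"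
      using e[of 1] e[of 2] e[of 3] mvk by (auto simp: mv_def split: if_splits)
    then show ?thesis by (simp add: tt_def)
  qed
  have e1: "P 1 q = st k 1 + (if 1 = mv k then q - T k else 0)" using e[of 1] by simp
  have e2: "P 2 q = st k 2 + (if 2 = mv k then q - T k else 0)" using e[of 2] by simp
  have e3: "P 3 q = st k 3 + (if 3 = mv k then q - T k else 0)" using e[of 3] by simp
  have s1: "st (Suc k) 1 = st k 1 + (if 1 = mv k then T (Suc k) - T k else 0)" using s[of 1] by simp
  have s2: "st (Suc k) 2 = st k 2 + (if 2 = mv k then T (Suc k) - T k else 0)" using s[of 2] by simp
  have s3: "st (Suc k) 3 = st k 3 + (if 3 = mv k then T (Suc k) - T k else 0)" using s[of 3] by simp
  consider "mv k = 1" | "mv k = 2" | "mv k = 3" using mvk by blast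
  then show ?thesis
  proof cases
    case 1
    then have "P 1 q = st k 1 + (q - T k)" "P 2 q = st k 2" "P 3 q = st k 3"
      "st (Suc k) 1 = st k 1 + (T (Suc k) - T k)" "st (Suc k) 2 = st k 2" "st (Suc k) 3 = st k 3"
      using e1 e2 e3 s1 s2 s3 by simp_all
    then show ?thesis using o1 o2 kq sum by linarith
  next
    case 2
    then have "P 1 q = st k 1" "P 2 q = st k 2 + (q - T k)" "P 3 q = st k 3"
      "st (Suc k) 1 = st k 1" "st (Suc k) 2 = st k 2 + (T (Suc k) - T k)" "st (Suc k) 3 = st k 3"
      using e1 e2 e3 s1 s2 s3 by simp_all
    then show ?thesis using o1 o2 kq sum by linarith
  next
    case 3
    then have "P 1 q = st k 1" "P 2 q = st k 2" "P 3 q = st k 3 + (q - T k)"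
      "st (Suc k) 1 = st k 1" "st (Suc k) 2 = st k 2" "st (Suc k) 3 = st k 3 + (T (Suc k) - T k)"
      using e1 e2 e3 s1 s2 s3 by simp_all
    then show ?thesis using o1 o2 kq sum by linarith
  qed
qed

lemma three: "three_system (T 0) (P 1) (P 2) (P 3)"
proof -
  have c1: "\<forall>q\<ge>T 0. 0 \<le> P 1 q \<and> P 1 q \<le> P 2 q \<and> P 2 q \<le> P 3 q \<and> P 1 q + P 2 q + P 3 q = q"
    using ordered by blast
  have c2: "\<forall>k. mv k \<in> {1,2,3} \<and> (\<forall>q. T k \<le> q \<and> q \<le> T (Suc k) \<longrightarrow>
              (\<forall>j\<in>{1,2,3}. sys_comp (P 1) (P 2) (P 3) j q =
                 sys_comp (P 1) (P 2) (P 3) j (T k) + (if j = mv k then q - T k else 0)))"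
  proof (intro allI conjI impI ballI)
    fix k show "mv k \<in> {1,2,3}" by (simp add: mv_def)
  next
    fix k q j assume q: "T k \<le> q \<and> q \<le> T (Suc k)" and j: "j \<in> {1::nat,2,3}"
    show "sys_comp (P 1) (P 2) (P 3) j q = sys_comp (P 1) (P 2) (P 3) j (T k) + (if j = mv k then q - T k else 0)"
      using sc[OF j] P_seg[of k q j] q j P_at[OF j, of k] by simp
  qed
  have c3: "\<forall>k. mv k < mv (Suc k) \<longrightarrow> (\<forall>j. mv k \<le> j \<and> j \<le> mv (Suc k) \<longrightarrow>
              sys_comp (P 1) (P 2) (P 3) j (T (Suc k)) = sys_comp (P 1) (P 2) (P 3) (mv k) (T (Suc k)))"
  proof (intro allI impI)
    fix k j assume lt: "mv k < mv (Suc k)" and jj: "mv k \<le> j \<and> j \<le> mv (Suc k)"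
    have mj: "mv k \<in> {1,2,3}" by (simp add: mv_def)
    have jin: "j \<in> {1,2,3}" using jj by (auto simp: mv_def split: if_splits)
    have "st (Suc k) j = st (Suc k) (mv k)"
    proof (cases k rule: s_cases)
      case 1 then show ?thesis using lt suc_mod(1)[OF 1] by (simp add: mv_def)
    next
      case 2
      have "1 \<le> j \<and> j \<le> 2" using jj suc_mod(2)[OF 2] 2 by (simp add: mv_def)
      then have "j = 1 \<or> j = 2" by arith
      then show ?thesis using suc_mod(2)[OF 2] 2 by (auto simp: sst_def mv_def)
    next
      case 3
      have "2 \<le> j \<and> j \<le> 3" using jj suc_mod(3)[OF 3] 3 by (simp add: mv_def)
      then have "j = 2 \<or> j = 3" by arith
      then show ?thesis using suc_mod(3)[OF 3] 3 by (auto simp: sst_def mv_def)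
    next
      case 4 then show ?thesis using lt suc_mod(4)[OF 4] by (simp add: mv_def)
    qed
    then show "sys_comp (P 1) (P 2) (P 3) j (T (Suc k)) = sys_comp (P 1) (P 2) (P 3) (mv k) (T (Suc k))"
      unfolding sc[OF jin] sc[OF mj] P_at[OF jin] P_at[OF mj] .
  qed
  show ?thesis unfolding three_system_def
    apply (rule conjI)
     apply (rule c1)
    apply (rule exI[of _ T], rule exI[of _ mv])
    apply (intro conjI refl T_mono T_inf)
     apply (rule c2)
    apply (rule c3)
    done
qed

end

definition RR :: "(nat \<Rightarrow> real) \<Rightarrow> (nat \<Rightarrow> real) \<Rightarrow> (nat \<Rightarrow> real) \<Rightarrow> nat \<Rightarrow> real" where
  "RR A B C n = C n / (A n + B n + C n)"

lemma Limsup_mono_F: "F \<le> G \<Longrightarrow> Limsup F f \<le> Limsup G f"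
  unfolding Limsup_def by (rule INF_mono) (auto simp: le_filter_def)

lemma enum_tail:
  fixes s :: "nat \<Rightarrow> real"
  assumes sm: "strict_mono s"
  shows "enum_real {s k | k. k \<ge> K} i = s (K + i)"
proof (induction i)
  case 0
  have "Inf {s k | k. k \<ge> K} = s K"
    by (rule cInf_eq_minimum) (auto simp: strict_mono_less_eq[OF sm])
  then show ?case by simp
next
  case (Suc i)
  have "Inf {x \<in> {s k | k. k \<ge> K}. x > s (K + i)} = s (K + Suc i)"
  proof (rule cInf_eq_minimum)
    show "s (K + Suc i) \<in> {x \<in> {s k | k. k \<ge> K}. x > s (K + i)}"
      using strict_monoD[OF sm, of "K+i" "K + Suc i"] by auto
  next
    fix x assume "x \<in> {x \<in> {s k | k. k \<ge> K}. x > s (K + i)}"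
    then obtain k where k: "x = s k" "k \<ge> K" "s k > s (K+i)" by auto
    then have "K + i < k" using strict_mono_less[OF sm] by blast
    then show "s (K + Suc i) \<le> x" using k strict_mono_less_eq[OF sm] by simp
  qed
  then show ?case using Suc by simp
qed

context blocks begin

lemma Cpos: "0 < C n" using nonneg[of "Suc n"] AC[of n] by linarith

lemma T4: "T (4*n) = A n + B n + C n" by (rule tt0)

lemma T4pos: "0 < T (4*n)" using nonneg[of n] Cpos[of n] T4[of n] by linarith

lemma st4: "st (4*n) j = (if j = 1 then A n else if j = 2 then B n else C n)"
  by (simp add: sst_def)

lemma P3_at4: "P 3 (T (4*n)) = C n"
  using P_at[of 3 "4*n"] st4[of n 3] by simp

lemma T_le: "k \<le> k' \<Longrightarrow> T k \<le> T k'"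
  using T_mono by (simp add: strict_mono_less_eq)

lemma idx_bounds: assumes "T 0 \<le> q" "T a \<le> q" "q < T b"
  shows "a \<le> idx A B C q" "idx A B C q < b"
proof -
  have i: "T (idx A B C q) \<le> q" "q < T (Suc (idx A B C q))" using idx_ex[OF assms(1)] by auto
  show "a \<le> idx A B C q"
  proof (rule ccontr)
    assume "\<not> a \<le> idx A B C q"
    then have "Suc (idx A B C q) \<le> a" by simp
    then have "T (Suc (idx A B C q)) \<le> T a" by (rule T_le)
    then show False using i assms by simp
  qed
  show "idx A B C q < b"
  proof (rule ccontr)
    assume "\<not> idx A B C q < b"
    then have "b \<le> idx A B C q" by simp
    then have "T b \<le> T (idx A B C q)" by (rule T_le)
    then show False using i assms by simp
  qed
qed

lemma P3_block: assumes "k mod 4 = 3" "T (4*(k div 4)) \<le> q" "q \<le> T k"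
  shows "P 3 q = C (k div 4)"
proof (cases "q < T k")
  case False
  then have "q = T k" using assms by simp
  then show ?thesis using P_at[of 3 k] assms(1) by (simp add: sst_def)
next
  case True
  define i where "i = idx A B C q"
  have q0: "T 0 \<le> q" using T_le[of 0 "4*(k div 4)"] assms by simp
  have ib: "4*(k div 4) \<le> i" "i < k" using idx_bounds[OF q0 assms(2) True] by (auto simp: i_def)
  have iq: "T i \<le> q" "q < T (Suc i)" using idx_ex[OF q0] by (auto simp: i_def)
  have "P 3 q = st i 3 + (if 3 = mv i then q - T i else 0)" using P_seg[of i q 3] iq by simp
  moreover have "i div 4 = k div 4" "i mod 4 \<noteq> 3" using ib assms(1) by presburger+
  ultimately show ?thesis by (simp add: sst_def mv_def)
qed

lemma P3_rise: assumes "k mod 4 = 3" "T k \<le> q" "q \<le> T (Suc k)"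
  shows "P 3 q = C (Suc (k div 4)) - (T (Suc k) - q)"
proof -
  have "P 3 q = st k 3 + (q - T k)" using P_seg[of k q 3] assms by (simp add: mv_def)
  moreover have "st (Suc k) 3 = st k 3 + (T (Suc k) - T k)" using step[of 3 k] assms by (simp add: mv_def)
  moreover have "Suc k mod 4 = 0" "Suc k div 4 = Suc (k div 4)" using assms(1) by presburger+
  ultimately show ?thesis by (simp add: sst_def)
qed

lemma ratio_le: assumes "T (4*n) \<le> q" "q \<le> T (4*Suc n)" "RR A B C n \<le> \<Phi>" "RR A B C (Suc n) \<le> \<Phi>"
  shows "P 3 q / q \<le> \<Phi>"
proof -
  define k where "k = 4*n+3"
  have km: "k mod 4 = 3" "k div 4 = n" "Suc k = 4 * Suc n" by (simp_all add: k_def)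
  have qpos: "0 < q" using T4pos[of n] assms by linarith
  show ?thesis
  proof (cases "q \<le> T k")
    case True
    have "P 3 q = C n" using P3_block[of k q] km assms True by simp
    moreover have "C n / q \<le> C n / T (4*n)"
      using Cpos[of n] T4pos[of n] assms(1) by (intro divide_left_mono) auto
    ultimately show ?thesis using assms(3) T4[of n] by (simp add: RR_def)
  next
    case False
    have p: "P 3 q = C (Suc n) - (T (4 * Suc n) - q)" using P3_rise[of k q] km assms False by simp
    define Q where "Q = T (4 * Suc n)"
    have Qe: "Q = A (Suc n) + B (Suc n) + C (Suc n)" using T4[of "Suc n"] by (simp add: Q_def)
    have Qp: "0 < Q" using T4pos[of "Suc n"] by (simp add: Q_def)
    have CQ: "C (Suc n) \<le> Q" using Qe nonneg[of "Suc n"] by linarith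
    have "(C (Suc n) - (Q - q)) * Q \<le> C (Suc n) * q"
    proof -
      have "(Q - q) * (C (Suc n) - Q) \<le> 0" using CQ assms(2) Q_def
        by (intro mult_nonneg_nonpos) auto
      then show ?thesis by (simp add: algebra_simps)
    qed
    then have "(C (Suc n) - (Q - q)) / q \<le> C (Suc n) / Q"
      using qpos Qp by (simp add: divide_simps)
    then show ?thesis using p assms(4) Qe by (simp add: RR_def Q_def)
  qed
qed

lemma ratio_le_all: assumes "\<And>n. n \<ge> 1 \<Longrightarrow> RR A B C n \<le> \<Phi>" "T 4 \<le> q"
  shows "P 3 q / q \<le> \<Phi>"
proof -
  have q0: "T 0 \<le> q" using T_le[of 0 4] assms by simp
  define i where "i = idx A B C q"
  have iq: "T i \<le> q" "q < T (Suc i)" using idx_ex[OF q0] by (auto simp: i_def)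
  have i4: "4 \<le> i" using idx_bounds[OF q0 assms(2) iq(2)] by (simp add: i_def)
  define n where "n = i div 4"
  have "T (4*n) \<le> T i" by (rule T_le) (simp add: n_def)
  moreover have "T (Suc i) \<le> T (4 * Suc n)" by (rule T_le) (unfold n_def; presburger)
  moreover have "n \<ge> 1" using i4 by (simp add: n_def)
  ultimately show ?thesis using ratio_le[of n q \<Phi>] assms iq by simp
qed

lemma switch: "switch_pts (T 0) (P 3) = {T (4*n) | n. n \<ge> 1}"
proof (intro set_eqI iffI)
  fix q assume "q \<in> {T (4*n) | n. n \<ge> 1}"
  then obtain m where q: "q = T (4 * Suc m)" by (auto dest!: Suc_le_D)
  define k where "k = 4*m+3"
  have km: "k mod 4 = 3" "k div 4 = m" "Suc k = 4 * Suc m" by (simp_all add: k_def)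
  have qk: "q = T (Suc k)" using q km by simp
  have gt: "T 0 < q" using q T_mono by (simp add: strict_mono_less)
  have left: "\<forall>x. q - (T (Suc k) - T k) \<le> x \<and> x \<le> q \<longrightarrow> P 3 x = P 3 q - (q - x)"
  proof (intro allI impI)
    fix x assume x: "q - (T (Suc k) - T k) \<le> x \<and> x \<le> q"
    have "P 3 x = C (Suc m) - (T (Suc k) - x)" using P3_rise[of k x] km x qk by simp
    moreover have "P 3 q = C (Suc m)" using P3_at4[of "Suc m"] q by simp
    ultimately show "P 3 x = P 3 q - (q - x)" using qk by simp
  qed
  define k2 where "k2 = 4 * Suc m + 3"
  have k2m: "k2 mod 4 = 3" "k2 div 4 = Suc m" by (simp_all add: k2_def)
  have right: "\<forall>x. q \<le> x \<and> x \<le> q + (T k2 - q) \<longrightarrow> P 3 x = P 3 q"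
  proof (intro allI impI)
    fix x assume x: "q \<le> x \<and> x \<le> q + (T k2 - q)"
    have "P 3 x = C (Suc m)" using P3_block[of k2 x] k2m x q by simp
    then show "P 3 x = P 3 q" using P3_at4[of "Suc m"] q by simp
  qed
  have e1: "T (Suc k) - T k > 0" using len_pos[of k] by simp
  have e2: "T k2 - q > 0" using q T_mono by (simp add: strict_mono_less k2_def)
  have L: "\<exists>e>0. \<forall>x. q - e \<le> x \<and> x \<le> q \<longrightarrow> P 3 x = P 3 q - (q - x)"
    apply (rule exI[of _ "T (Suc k) - T k"]) using e1 left by blast
  have R: "\<exists>e>0. \<forall>x. q \<le> x \<and> x \<le> q + e \<longrightarrow> P 3 x = P 3 q"
    apply (rule exI[of _ "T k2 - q"]) using e2 right by blast
  show "q \<in> switch_pts (T 0) (P 3)"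
    unfolding switch_pts_def mem_Collect_eq using gt L R by (intro conjI)
next
  fix q assume qs: "q \<in> switch_pts (T 0) (P 3)"
  have gt: "T 0 < q" using qs unfolding switch_pts_def by simp
  obtain e1 where e1: "e1 > 0" "\<forall>x. q - e1 \<le> x \<and> x \<le> q \<longrightarrow> P 3 x = P 3 q - (q - x)"
    using qs unfolding switch_pts_def mem_Collect_eq by (elim conjE exE) (rule that)
  obtain e2 where e2: "e2 > 0" "\<forall>x. q \<le> x \<and> x \<le> q + e2 \<longrightarrow> P 3 x = P 3 q"
    using qs unfolding switch_pts_def mem_Collect_eq by (elim conjE exE) (rule that)
  define k where "k = idx A B C q"
  have kq: "T k \<le> q" "q < T (Suc k)" using idx_ex gt by (auto simp: k_def)
  have seg: "\<And>x k. T k \<le> x \<Longrightarrow> x \<le> T (Suc k) \<Longrightarrow> P 3 x = st k 3 + (if 3 = mv k then x - T k else 0)"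
    using P_seg by simp
  have qT: "q = T k"
  proof (rule ccontr)
    assume "q \<noteq> T k"
    then have lt: "T k < q" using kq by simp
    define x where "x = min (q + e2) (T (Suc k))"
    have x: "q < x" "x \<le> q + e2" "x \<le> T (Suc k)" using e2(1) kq by (auto simp: x_def)
    have "P 3 x = P 3 q" by (rule e2(2)[rule_format, OF conjI[OF less_imp_le[OF x(1)] x(2)]])
    moreover have "P 3 x = st k 3 + (if 3 = mv k then x - T k else 0)" using seg[of k x] x lt by simp
    moreover have "P 3 q = st k 3 + (if 3 = mv k then q - T k else 0)" using seg[of k q] kq by simp
    ultimately have nm: "mv k \<noteq> 3"
    proof -
      assume a: "P 3 x = P 3 q" "P 3 x = st k 3 + (if 3 = mv k then x - T k else 0)"
        "P 3 q = st k 3 + (if 3 = mv k then q - T k else 0)"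
      show "mv k \<noteq> 3"
      proof
        assume "mv k = 3"
        then have "P 3 x = st k 3 + (x - T k)" "P 3 q = st k 3 + (q - T k)" using a by simp_all
        then show False using a(1) x(1) by simp
      qed
    qed
    define y where "y = max (q - e1) (T k)"
    have y: "y < q" "q - e1 \<le> y" "T k \<le> y" using e1(1) lt by (auto simp: y_def)
    have "P 3 y = P 3 q - (q - y)" by (rule e1(2)[rule_format, OF conjI[OF y(2) less_imp_le[OF y(1)]]])
    moreover have "P 3 y = st k 3" using seg[of k y] y kq nm by simp
    moreover have "P 3 q = st k 3" using seg[of k q] kq nm by simp
    ultimately show False using y by simp
  qed
  have k0: "k \<noteq> 0"
  proof
    assume "k = 0" then show False using qT gt by simp
  qed
  then obtain k' where k': "k = Suc k'" by (cases k) auto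
  define y where "y = max (q - e1) (T k')"
  have Tk': "T k' < q" using qT k' len_pos[of k'] by simp
  have y: "y < q" "q - e1 \<le> y" "T k' \<le> y" using e1(1) Tk' by (auto simp: y_def)
  have "P 3 y = P 3 q - (q - y)" by (rule e1(2)[rule_format, OF conjI[OF y(2) less_imp_le[OF y(1)]]])
  moreover have "P 3 y = st k' 3 + (if 3 = mv k' then y - T k' else 0)" using seg[of k' y] y qT k' by simp
  moreover have "P 3 q = st k' 3 + (if 3 = mv k' then q - T k' else 0)" using seg[of k' q] qT k' Tk' by simp
  ultimately have "mv k' = 3"
  proof -
    assume a: "P 3 y = P 3 q - (q - y)" "P 3 y = st k' 3 + (if 3 = mv k' then y - T k' else 0)"
      "P 3 q = st k' 3 + (if 3 = mv k' then q - T k' else 0)"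
    show "mv k' = 3"
    proof (rule ccontr)
      assume "mv k' \<noteq> 3"
      then have "P 3 y = st k' 3" "P 3 q = st k' 3" using a by simp_all
      then show False using a(1) y(1) by simp
    qed
  qed
  then have "k' mod 4 = 3" by (simp add: mv_def split: if_splits)
  then have "k = 4 * (k' div 4 + 1)" using k' by presburger
  then show "q \<in> {T (4*n) | n. n \<ge> 1}" using qT by (intro CollectI exI[of _ "k' div 4 + 1"]) simp
qed

lemma P1_inf: "filterlim (P 1) at_top at_top"
  unfolding filterlim_at_top
proof
  fix Z :: real
  obtain n where n: "Z \<le> C n"
    using Cinf unfolding filterlim_at_top eventually_sequentially by blast
  have AZ: "Z \<le> A (Suc (Suc n))" using n BA[of "Suc n"] BC[of n] by simp
  define s0 where "s0 = 4 * Suc (Suc n)"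
  have inc: "incseq (\<lambda>s. st s 1)"
  proof (rule incseq_SucI)
    fix s show "st s 1 \<le> st (Suc s) 1" using step[of 1 s] len_pos[of s] by simp
  qed
  show "eventually (\<lambda>q. Z \<le> P 1 q) at_top"
    unfolding eventually_at_top_linorder
  proof (intro exI allI impI)
    fix q assume q: "T s0 \<le> q"
    have q0: "T 0 \<le> q" using T_le[of 0 s0] q by simp
    define i where "i = idx A B C q"
    have iq: "T i \<le> q" "q < T (Suc i)" using idx_ex[OF q0] by (auto simp: i_def)
    have "s0 \<le> i" using idx_bounds[OF q0 q iq(2)] by (simp add: i_def)
    then have "st s0 1 \<le> st i 1" using inc by (simp add: incseq_def)
    moreover have "st s0 1 = A (Suc (Suc n))" using st4[of "Suc (Suc n)" 1] by (simp add: s0_def)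
    moreover have "st i 1 \<le> P 1 q" using P_seg[of i q 1] iq by simp
    ultimately show "Z \<le> P 1 q" using AZ by linarith
  qed
qed

end

context blocks begin

lemma main_blocks:
  fixes N :: "nat \<Rightarrow> nat" and \<theta> \<Phi> \<kappa>t :: real
  assumes Nm: "strict_mono N" and N0: "N 0 \<ge> 1"
  and fill: "\<And>n. n \<ge> 1 \<Longrightarrow> n \<notin> range N \<Longrightarrow> RR A B C n \<le> \<theta>" and th: "\<theta> < \<Phi>"
  and dmono: "incseq (\<lambda>k. RR A B C (N k))" and dlim: "(\<lambda>k. RR A B C (N k)) \<longlonglongrightarrow> \<Phi>"
  and klim: "(\<lambda>k. C (N k) / (A (N (Suc k)) + B (N (Suc k)) + C (N k))) \<longlonglongrightarrow> \<kappa>t"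
  shows "\<exists>q0 P1 P2 P3. q0 \<ge> 0 \<and> three_system q0 P1 P2 P3 \<and> filterlim P1 at_top at_top \<and>
           infinite (switch_pts q0 P3) \<and> phibar P3 = ereal \<Phi> \<and> has_kappa q0 P3 (ereal \<kappa>t)"
proof -
  have Nge: "\<And>k. N k \<ge> 1" using Nm N0 by (meson le_trans strict_mono_less_eq zero_le)
  have dle: "\<And>k. RR A B C (N k) \<le> \<Phi>" using incseq_le[OF dmono dlim] .
  have all: "\<And>n. n \<ge> 1 \<Longrightarrow> RR A B C n \<le> \<Phi>"
  proof -
    fix n :: nat assume n: "n \<ge> 1"
    show "RR A B C n \<le> \<Phi>"
    proof (cases "n \<in> range N")
      case True then show ?thesis using dle by auto
    next
      case False then show ?thesis using fill[OF n False] th by linarith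
    qed
  qed
  have q0: "0 \<le> T 0" using T4pos[of 0] by simp
  have sw: "switch_pts (T 0) (P 3) = range (\<lambda>m. T (4 * Suc m))"
    unfolding switch
  proof (intro set_eqI iffI)
    fix x assume "x \<in> {T (4*n) | n. n \<ge> 1}"
    then obtain n where "x = T (4*n)" "n \<ge> 1" by auto
    then show "x \<in> range (\<lambda>m. T (4 * Suc m))"
      by (intro image_eqI[of _ _ "n - 1"]) auto
  next
    fix x assume "x \<in> range (\<lambda>m. T (4 * Suc m))"
    then obtain m where "x = T (4 * Suc m)" by auto
    then show "x \<in> {T (4*n) | n. n \<ge> 1}" by (intro CollectI exI[of _ "Suc m"]) simp
  qed
  have sm4: "strict_mono (\<lambda>m. T (4 * Suc m))"
    by (rule strict_monoI) (simp add: strict_mono_less[OF T_mono])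
  have inf: "infinite (switch_pts (T 0) (P 3))"
    unfolding sw by (rule range_inj_infinite) (rule strict_mono_imp_inj_on[OF sm4])
  define x where "x k = T (4 * N k)" for k
  have smx: "strict_mono x"
    unfolding x_def by (rule strict_monoI) (simp add: strict_mono_less[OF T_mono] strict_mono_less[OF Nm])
  have xlim: "filterlim x at_top sequentially"
  proof (rule filterlim_at_top_mono[OF T_inf])
    show "eventually (\<lambda>k. T k \<le> x k) sequentially"
    proof (rule always_eventually, rule allI)
      fix k
      have "k \<le> N k" using strict_mono_imp_increasing[OF Nm] .
      then have "k \<le> 4 * N k" by simp
      then show "T k \<le> x k" unfolding x_def by (rule T_le)
    qed
  qed
  have fx: "\<And>k. P 3 (x k) / x k = RR A B C (N k)"
    unfolding x_def RR_def using P3_at4 T4 by simp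
  have ph: "phibar (P 3) = ereal \<Phi>"
    unfolding phibar_def
  proof (rule antisym)
    show "Limsup at_top (\<lambda>q. ereal (P 3 q / q)) \<le> ereal \<Phi>"
    proof (rule Limsup_bounded)
      show "eventually (\<lambda>q. ereal (P 3 q / q) \<le> ereal \<Phi>) at_top"
        unfolding eventually_at_top_linorder
        using ratio_le_all[OF all] by auto
    qed
  next
    have e: "Limsup sequentially (\<lambda>k. ereal (P 3 (x k) / x k)) = ereal \<Phi>"
      unfolding fx by (rule lim_imp_Limsup) (simp_all add: dlim)
    have "ereal \<Phi> = Limsup sequentially (\<lambda>k. ereal (P 3 (x k) / x k))" using e by simp
    also have "\<dots> \<le> Limsup (filtermap x sequentially) (\<lambda>q. ereal (P 3 q / q))"
      by (rule Limsup_filtermap_ge)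
    also have "\<dots> \<le> Limsup at_top (\<lambda>q. ereal (P 3 q / q))"
      using xlim unfolding filterlim_def by (rule Limsup_mono_F)
    finally show "ereal \<Phi> \<le> Limsup at_top (\<lambda>q. ereal (P 3 q / q))" .
  qed
  have key: "kappa_alpha (T 0) (P 3) \<alpha> = ereal \<kappa>t" if a1: "\<theta> < \<alpha>" and a2: "\<alpha> < \<Phi>" for \<alpha>
  proof -
    have ex: "\<exists>k. \<alpha> \<le> RR A B C (N k)"
    proof -
      have "eventually (\<lambda>k. \<alpha> < RR A B C (N k)) sequentially"
        using order_tendstoD(1)[OF dlim a2] .
      then show ?thesis by (auto simp: eventually_sequentially intro: less_imp_le)
    qed
    define K where "K = (LEAST k. \<alpha> \<le> RR A B C (N k))"
    have KP: "\<alpha> \<le> RR A B C (N K)" unfolding K_def using ex by (rule LeastI_ex)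
    have iff: "\<alpha> \<le> RR A B C (N k) \<longleftrightarrow> K \<le> k" for k
    proof
      assume "\<alpha> \<le> RR A B C (N k)" then show "K \<le> k" unfolding K_def by (rule Least_le)
    next
      assume "K \<le> k"
      then have "RR A B C (N K) \<le> RR A B C (N k)" using dmono by (simp add: incseq_def)
      then show "\<alpha> \<le> RR A B C (N k)" using KP by simp
    qed
    have S: "{q \<in> switch_pts (T 0) (P 3). P 3 q / q \<ge> \<alpha>} = {x k | k. k \<ge> K}"
    proof (intro set_eqI iffI)
      fix q assume "q \<in> {q \<in> switch_pts (T 0) (P 3). P 3 q / q \<ge> \<alpha>}"
      then obtain n where q: "q = T (4*n)" "n \<ge> 1" "\<alpha> \<le> P 3 q / q" unfolding switch by auto
      have r: "\<alpha> \<le> RR A B C n" using q P3_at4[of n] T4[of n] by (simp add: RR_def)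
      have "n \<in> range N"
      proof (rule ccontr)
        assume "n \<notin> range N"
        then have "RR A B C n \<le> \<theta>" using fill q by simp
        then show False using r a1 by simp
      qed
      then obtain k where k: "n = N k" by auto
      then have "K \<le> k" using iff r by simp
      then show "q \<in> {x k | k. k \<ge> K}" using q k x_def by auto
    next
      fix q assume "q \<in> {x k | k. k \<ge> K}"
      then obtain k where k: "q = x k" "K \<le> k" by auto
      have "q \<in> switch_pts (T 0) (P 3)" unfolding switch using k Nge x_def by auto
      moreover have "\<alpha> \<le> P 3 q / q" using k fx iff by simp
      ultimately show "q \<in> {q \<in> switch_pts (T 0) (P 3). P 3 q / q \<ge> \<alpha>}" by simp
    qed
    have qa: "q_alpha (T 0) (P 3) \<alpha> i = x (K + i)" for i
      unfolding q_alpha_def S by (rule enum_tail[OF smx])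
    define \<kappa> where "\<kappa> k = C (N k) / (A (N (Suc k)) + B (N (Suc k)) + C (N k))" for k
    have eq: "P 3 (q_alpha (T 0) (P 3) \<alpha> i) / r_alpha (T 0) (P 3) \<alpha> i = \<kappa> (i + K)" for i
    proof -
      have "r_alpha (T 0) (P 3) \<alpha> i = A (N (Suc (K+i))) + B (N (Suc (K+i))) + C (N (K+i))"
        unfolding r_alpha_def qa using P3_at4 T4 by (simp add: x_def)
      then show ?thesis unfolding qa using P3_at4 by (simp add: x_def \<kappa>_def add.commute)
    qed
    have lim2: "(\<lambda>i. ereal (\<kappa> (i + K))) \<longlonglongrightarrow> ereal \<kappa>t"
      using LIMSEQ_ignore_initial_segment[OF klim[folded \<kappa>_def], of K] by (rule tendsto_ereal)
    show ?thesis
      unfolding kappa_alpha_def eq by (rule lim_imp_Liminf[OF trivial_limit_sequentially lim2])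
  qed
  have hk: "has_kappa (T 0) (P 3) (ereal \<kappa>t)"
    unfolding has_kappa_def ph real_of_ereal.simps
  proof (rule tendsto_eventually)
    show "eventually (\<lambda>\<alpha>. kappa_alpha (T 0) (P 3) \<alpha> = ereal \<kappa>t) (at_left \<Phi>)"
      using eventually_at_left_real[OF th] by (rule eventually_mono) (auto intro: key)
  qed
  show ?thesis
    using q0 three P1_inf inf ph hk by blast
qed

end

definition gg :: "(nat \<Rightarrow> real) \<Rightarrow> (nat \<Rightarrow> real) \<Rightarrow> real \<Rightarrow> (nat \<Rightarrow> nat) \<Rightarrow> nat \<Rightarrow> real" where
  "gg \<tau> lv \<gamma> N n = (if Suc n \<in> range N then lv n * (1 + \<tau> n) else \<gamma>)"

primrec CCd :: "(nat \<Rightarrow> real) \<Rightarrow> (nat \<Rightarrow> real) \<Rightarrow> real \<Rightarrow> (nat \<Rightarrow> nat) \<Rightarrow> nat \<Rightarrow> real" where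
  "CCd \<tau> lv \<gamma> N 0 = 1"
| "CCd \<tau> lv \<gamma> N (Suc n) = gg \<tau> lv \<gamma> N n * CCd \<tau> lv \<gamma> N n"

definition AAd :: "(nat \<Rightarrow> real) \<Rightarrow> (nat \<Rightarrow> real) \<Rightarrow> real \<Rightarrow> (nat \<Rightarrow> nat) \<Rightarrow> real \<Rightarrow> nat \<Rightarrow> real" where
  "AAd \<tau> lv \<gamma> N ai n = (case n of 0 \<Rightarrow> ai | Suc m \<Rightarrow> \<tau> m * CCd \<tau> lv \<gamma> N m)"

definition BBd :: "(nat \<Rightarrow> real) \<Rightarrow> (nat \<Rightarrow> real) \<Rightarrow> real \<Rightarrow> (nat \<Rightarrow> nat) \<Rightarrow> real \<Rightarrow> nat \<Rightarrow> real" where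
  "BBd \<tau> lv \<gamma> N bi n = (case n of 0 \<Rightarrow> bi | Suc m \<Rightarrow> CCd \<tau> lv \<gamma> N m)"

lemma design:
  fixes \<tau> lv :: "nat \<Rightarrow> real" and \<gamma> ai bi gm \<theta> \<Phi> \<kappa>t :: real and N :: "nat \<Rightarrow> nat"
  assumes \<tau>: "\<And>n. 0 < \<tau> n \<and> \<tau> n < 1"
  and gm: "1 < gm" "\<And>n. gm \<le> gg \<tau> lv \<gamma> N n"
  and tg: "\<And>n. 1 < \<tau> (Suc n) * gg \<tau> lv \<gamma> N n"
  and ab: "0 \<le> ai" "ai \<le> bi" "bi < \<tau> 0"
  and Nm: "strict_mono N" "N 0 \<ge> 1"
  and fill: "\<And>n. Suc n \<notin> range N \<Longrightarrow> \<gamma> / (1 + \<tau> n + \<gamma>) \<le> \<theta>" "\<theta> < \<Phi>"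
  and dmono: "incseq (\<lambda>k. lv (N k - 1) / (1 + lv (N k - 1)))"
  and dlim: "(\<lambda>k. lv (N k - 1) / (1 + lv (N k - 1))) \<longlonglongrightarrow> \<Phi>"
  and klim: "(\<lambda>k. 1 / (1 + (1 + \<tau> (N (Suc k) - 1)) * \<gamma> ^ (N (Suc k) - N k - 1))) \<longlonglongrightarrow> \<kappa>t"
  shows "\<exists>q0 P1 P2 P3. q0 \<ge> 0 \<and> three_system q0 P1 P2 P3 \<and> filterlim P1 at_top at_top \<and>
           infinite (switch_pts q0 P3) \<and> phibar P3 = ereal \<Phi> \<and> has_kappa q0 P3 (ereal \<kappa>t)"
proof -
  define g where "g = gg \<tau> lv \<gamma> N"
  define C where "C = CCd \<tau> lv \<gamma> N"
  define A where "A = AAd \<tau> lv \<gamma> N ai"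
  define B where "B = BBd \<tau> lv \<gamma> N bi"
  have C0: "C 0 = 1" and CS: "\<And>n. C (Suc n) = g n * C n" by (simp_all add: C_def g_def)
  have A0: "A 0 = ai" and AS: "\<And>n. A (Suc n) = \<tau> n * C n" by (simp_all add: A_def AAd_def C_def)
  have B0: "B 0 = bi" and BS: "\<And>n. B (Suc n) = C n" by (simp_all add: B_def BBd_def C_def)
  have gpos: "\<And>n. 1 < g n" using gm by (auto simp: g_def intro: less_le_trans)
  have Cge: "\<And>n. gm ^ n \<le> C n"
  proof -
    fix n show "gm ^ n \<le> C n"
    proof (induction n)
      case 0 then show ?case by (simp add: C0)
    next
      case (Suc n)
      have gn: "0 \<le> g n" using gpos[of n] by simp
      have "gm * gm ^ n \<le> g n * C n"
        using Suc gm gn by (intro mult_mono) (auto simp: g_def)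
      then show ?case by (simp add: CS)
    qed
  qed
  have Cpos: "\<And>n. 0 < C n" using Cge gm(1) by (meson less_le_trans zero_less_one zero_less_power less_trans)
  have Cinf: "filterlim C at_top sequentially"
  proof (rule filterlim_at_top_mono)
    have "filterlim (\<lambda>n. norm (gm ^ n)) at_top sequentially"
      using filterlim_at_infinity_imp_norm_at_top[OF filterlim_realpow_sequentially_gt1[of gm]] gm(1) by simp
    then show "filterlim (\<lambda>n. gm ^ n) at_top sequentially" using gm(1) by (simp add: abs_of_pos)
    show "eventually (\<lambda>n. gm ^ n \<le> C n) sequentially" using Cge by simp
  qed
  interpret blocks A B C
  proof
    show "0 \<le> A 0" "A 0 \<le> B 0" using ab by (simp_all add: A0 B0)
  next
    fix n show "B n < A (Suc n)"
    proof (cases n)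
      case 0 then show ?thesis using ab by (simp add: A0 B0 AS BS C0)
    next
      case (Suc m)
      have "C m < \<tau> (Suc m) * g m * C m" using tg[of m] Cpos[of m] by (simp add: g_def)
      then show ?thesis using Suc by (simp add: AS BS CS mult.assoc)
    qed
  next
    fix n show "A (Suc n) < C n" using \<tau>[of n] Cpos[of n] by (simp add: AS)
  next
    fix n show "B (Suc n) = C n" by (simp add: BS)
  next
    fix n show "C n < C (Suc n)" using gpos[of n] Cpos[of n] by (simp add: CS)
  next
    show "filterlim C at_top sequentially" by (rule Cinf)
  qed
  have RS: "RR A B C (Suc n) = g n / (1 + \<tau> n + g n)" for n
  proof -
    have "RR A B C (Suc n) = (g n * C n) / ((1 + \<tau> n + g n) * C n)"
      by (simp add: RR_def AS BS CS algebra_simps)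
    then show ?thesis using Cpos[of n] by simp
  qed
  have Nge: "\<And>k. N k \<ge> 1" using Nm by (meson le_trans strict_mono_less_eq zero_le)
  have Rdes: "RR A B C (N k) = lv (N k - 1) / (1 + lv (N k - 1))" for k
  proof -
    define m where "m = N k - 1"
    have Nk: "N k = Suc m" using Nge[of k] by (simp add: m_def)
    have gm: "g m = lv m * (1 + \<tau> m)" using Nk by (auto simp: g_def gg_def intro: range_eqI[of _ _ k])
    have lp: "0 < 1 + lv m"
    proof -
      have "1 < lv m * (1 + \<tau> m)" using gpos[of m] gm by simp
      then have "0 < lv m" using \<tau>[of m] by (smt (verit) mult_nonpos_nonneg)
      then show ?thesis by simp
    qed
    have "RR A B C (N k) = (lv m * (1 + \<tau> m)) / ((1 + lv m) * (1 + \<tau> m))"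
      unfolding Nk RS gm by (simp add: algebra_simps)
    also have "\<dots> = lv m / (1 + lv m)" using \<tau>[of m] by simp
    finally show ?thesis by (simp add: m_def)
  qed
  have fillR: "RR A B C n \<le> \<theta>" if n1: "n \<ge> 1" and n2: "n \<notin> range N" for n
  proof -
    obtain m where n: "n = Suc m" using n1 by (cases n) auto
    have "g m = \<gamma>" using n2 n by (simp add: g_def gg_def)
    then show ?thesis using RS[of m] fill(1)[of m] n2 n by simp
  qed
  have geo: "C (n + d) = \<gamma> ^ d * C n" if "\<And>i. i < d \<Longrightarrow> Suc (n + i) \<notin> range N" for n d
    using that
  proof (induction d)
    case 0 then show ?case by simp
  next
    case (Suc d)
    have "g (n + d) = \<gamma>" using Suc.prems[of d] by (simp add: g_def gg_def)
    then show ?case using Suc by (simp add: CS)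
  qed
  have kap: "C (N k) / (A (N (Suc k)) + B (N (Suc k)) + C (N k)) =
      1 / (1 + (1 + \<tau> (N (Suc k) - 1)) * \<gamma> ^ (N (Suc k) - N k - 1))" for k
  proof -
    define n where "n = N k"
    define d where "d = N (Suc k) - N k - 1"
    define m where "m = N (Suc k) - 1"
    have lt: "N k < N (Suc k)" using Nm(1) by (simp add: strict_mono_less)
    have m: "m = n + d" "N (Suc k) = Suc m" using lt by (auto simp: m_def n_def d_def)
    have notin: "Suc (n + i) \<notin> range N" if "i < d" for i
    proof
      assume "Suc (n + i) \<in> range N"
      then obtain j where j: "Suc (n + i) = N j" by auto
      have "N k < N j" "N j < N (Suc k)" using j that by (auto simp: n_def d_def)
      then have "k < j" "j < Suc k" using Nm(1) by (simp_all add: strict_mono_less)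
      then show False by simp
    qed
    have Cm: "C m = \<gamma> ^ d * C n" using geo[of d n] notin m(1) by simp
    have "C (N k) / (A (N (Suc k)) + B (N (Suc k)) + C (N k)) = C n / (\<tau> m * C m + C m + C n)"
      by (simp add: m(2) AS BS n_def)
    also have "\<dots> = C n / ((1 + (1 + \<tau> m) * \<gamma> ^ d) * C n)"
      by (simp add: Cm algebra_simps)
    also have "\<dots> = 1 / (1 + (1 + \<tau> m) * \<gamma> ^ d)" using Cpos[of n] by simp
    finally show ?thesis by (simp add: m_def d_def)
  qed
  show ?thesis
  proof (rule main_blocks[OF Nm(1) Nm(2) _ fill(2)])
    show "\<And>n. 1 \<le> n \<Longrightarrow> n \<notin> range N \<Longrightarrow> RR A B C n \<le> \<theta>" using fillR by blast
    show "incseq (\<lambda>k. RR A B C (N k))" unfolding Rdes by (rule dmono)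
    show "(\<lambda>k. RR A B C (N k)) \<longlonglongrightarrow> \<Phi>" unfolding Rdes by (rule dlim)
    show "(\<lambda>k. C (N k) / (A (N (Suc k)) + B (N (Suc k)) + C (N k))) \<longlonglongrightarrow> \<kappa>t"
      unfolding kap by (rule klim)
  qed
qed

definition GOOD :: "real \<Rightarrow> real \<Rightarrow> bool" where
  "GOOD \<Phi> \<kappa> \<longleftrightarrow> (\<exists>q0 P1 P2 P3. q0 \<ge> 0 \<and> three_system q0 P1 P2 P3 \<and> filterlim P1 at_top at_top \<and>
           infinite (switch_pts q0 P3) \<and> phibar P3 = ereal \<Phi> \<and> has_kappa q0 P3 (ereal \<kappa>))"

lemma ratio_lim:
  fixes f :: "nat \<Rightarrow> real"
  assumes "filterlim f at_top sequentially"
  shows "(\<lambda>k. f k / (1 + f k)) \<longlonglongrightarrow> 1"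
proof -
  have f1: "filterlim (\<lambda>k. 1 + f k) at_top sequentially"
    by (rule filterlim_at_top_mono[OF assms]) simp
  have "(\<lambda>k. 1 - inverse (1 + f k)) \<longlonglongrightarrow> 1 - 0"
    by (intro tendsto_diff tendsto_const tendsto_inverse_0_at_top[OF f1])
  moreover have "eventually (\<lambda>k. 1 - inverse (1 + f k) = f k / (1 + f k)) sequentially"
  proof -
    have "eventually (\<lambda>k. 0 < f k) sequentially"
      using assms by (simp add: filterlim_at_top_dense)
    then show ?thesis
      by (rule eventually_mono) (simp add: field_simps)
  qed
  ultimately show ?thesis using Lim_transform_eventually by fastforce
qed

lemma ratio_inc:
  fixes f :: "nat \<Rightarrow> real"
  assumes "incseq f" "\<And>k. 0 \<le> f k"
  shows "incseq (\<lambda>k. f k / (1 + f k))"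
proof (rule incseq_SucI)
  fix k
  have a: "f k \<le> f (Suc k)" using assms(1) by (simp add: incseq_Suc_iff)
  have "f k * (1 + f (Suc k)) \<le> f (Suc k) * (1 + f k)" using a by (simp add: algebra_simps)
  then show "f k / (1 + f k) \<le> f (Suc k) / (1 + f (Suc k))"
    using assms(2)[of k] assms(2)[of "Suc k"] by (simp add: divide_simps)
qed

lemma pow_inf:
  fixes g :: real
  assumes "1 < g"
  shows "filterlim (\<lambda>n. g ^ n) at_top sequentially"
proof -
  have "filterlim (\<lambda>n. norm (g ^ n)) at_top sequentially"
    using filterlim_at_infinity_imp_norm_at_top[OF filterlim_realpow_sequentially_gt1[of g]] assms by simp
  then show ?thesis using assms by (simp add: abs_of_pos)
qed

primrec tri :: "nat \<Rightarrow> nat" where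
  "tri 0 = 1"
| "tri (Suc k) = tri k + k + 2"

lemma tri_mono: "strict_mono tri"
  by (rule strict_mono_Suc_iff[THEN iffD2]) simp

lemma tri_gap: "tri (Suc k) - tri k - 1 = k + 1" by simp

lemma tri_lim:
  fixes \<tau> \<gamma> :: real
  assumes "0 \<le> \<tau>" "1 < \<gamma>"
  shows "(\<lambda>k. 1 / (1 + (1 + \<tau>) * \<gamma> ^ (tri (Suc k) - tri k - 1))) \<longlonglongrightarrow> 0"
proof -
  have f: "filterlim (\<lambda>k. 1 + (1 + \<tau>) * \<gamma> ^ (k + 1)) at_top sequentially"
  proof (rule filterlim_at_top_mono[OF pow_inf[OF assms(2)]])
    show "eventually (\<lambda>k. \<gamma> ^ k \<le> 1 + (1 + \<tau>) * \<gamma> ^ (k + 1)) sequentially"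
    proof (rule always_eventually, rule allI)
      fix k
      have "\<gamma> ^ k \<le> \<gamma> ^ (k+1)" using assms by (intro power_increasing) auto
      also have "\<dots> \<le> (1 + \<tau>) * \<gamma> ^ (k + 1)"
      proof -
        have "0 \<le> \<gamma> ^ (k+1)" using assms by simp
        then have "1 * \<gamma> ^ (k+1) \<le> (1+\<tau>) * \<gamma> ^ (k+1)" using assms by (intro mult_right_mono) auto
        then show ?thesis by simp
      qed
      finally show "\<gamma> ^ k \<le> 1 + (1 + \<tau>) * \<gamma> ^ (k + 1)" by simp
    qed
  qed
  show ?thesis unfolding tri_gap
    using tendsto_inverse_0_at_top[OF f] by (simp add: divide_inverse)
qed

lemma fill_des:
  fixes \<tau> \<gamma> \<Phi> \<kappa>t :: real and lv :: "nat \<Rightarrow> real" and N :: "nat \<Rightarrow> nat"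
  assumes t: "0 < \<tau>" "\<tau> < 1" and tg: "1 < \<tau> * \<gamma>" and tl: "\<And>n. 1 < \<tau> * (lv n * (1 + \<tau>))"
  and Nm: "strict_mono N" "N 0 \<ge> 1"
  and fl: "\<gamma> / (1 + \<tau> + \<gamma>) < \<Phi>"
  and dmono: "incseq (\<lambda>k. lv (N k - 1) / (1 + lv (N k - 1)))"
  and dlim: "(\<lambda>k. lv (N k - 1) / (1 + lv (N k - 1))) \<longlonglongrightarrow> \<Phi>"
  and klim: "(\<lambda>k. 1 / (1 + (1 + \<tau>) * \<gamma> ^ (N (Suc k) - N k - 1))) \<longlonglongrightarrow> \<kappa>t"
  shows "GOOD \<Phi> \<kappa>t"
  unfolding GOOD_def
proof (rule design[where \<tau>="\<lambda>_. \<tau>" and lv=lv and \<gamma>=\<gamma> and N=N and ai=0 and bi="\<tau>/2"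
      and gm="min \<gamma> (1/\<tau>)" and \<theta>="\<gamma> / (1 + \<tau> + \<gamma>)"])
  have it: "1 < 1/\<tau>" using t by simp
  have g1: "1 < \<gamma>"
  proof -
    have "1/\<tau> < \<gamma>" using tg t by (simp add: divide_simps mult.commute)
    then show ?thesis using it by linarith
  qed
  show "1 < min \<gamma> (1/\<tau>)" using it g1 by simp
  show "\<And>n. min \<gamma> (1/\<tau>) \<le> gg (\<lambda>_. \<tau>) lv \<gamma> N n"
  proof -
    fix n
    have "1/\<tau> < lv n * (1 + \<tau>)" using tl[of n] t by (simp add: divide_simps mult.commute)
    then have "min \<gamma> (1/\<tau>) \<le> lv n * (1 + \<tau>)" by linarith
    then show "min \<gamma> (1/\<tau>) \<le> gg (\<lambda>_. \<tau>) lv \<gamma> N n" by (simp add: gg_def)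
  qed
  show "\<And>n. 1 < \<tau> * gg (\<lambda>_. \<tau>) lv \<gamma> N n" using tg tl by (simp add: gg_def)
  show "\<And>n. 0 < \<tau> \<and> \<tau> < 1" using t by simp
  show "0 \<le> (0::real)" "0 \<le> \<tau>/2" "\<tau>/2 < \<tau>" using t by simp_all
  show "strict_mono N" "1 \<le> N 0" by (fact Nm)+
  show "\<And>n. \<gamma> / (1 + \<tau> + \<gamma>) \<le> \<gamma> / (1 + \<tau> + \<gamma>)" by simp
  show "\<gamma> / (1 + \<tau> + \<gamma>) < \<Phi>" by (fact fl)
  show "incseq (\<lambda>k. lv (N k - 1) / (1 + lv (N k - 1)))" by (fact dmono)
  show "(\<lambda>k. lv (N k - 1) / (1 + lv (N k - 1))) \<longlonglongrightarrow> \<Phi>" by (fact dlim)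
  show "(\<lambda>k. 1 / (1 + (1 + \<tau>) * \<gamma> ^ (N (Suc k) - N k - 1))) \<longlonglongrightarrow> \<kappa>t" by (fact klim)
qed

lemma all_des:
  fixes \<tau> lv :: "nat \<Rightarrow> real" and \<tau>s gm \<Phi> :: real
  assumes t: "\<And>n. 0 < \<tau> n \<and> \<tau> n < 1" and tlim: "\<tau> \<longlonglongrightarrow> \<tau>s"
  and gm: "1 < gm" "\<And>n. gm \<le> lv n * (1 + \<tau> n)"
  and tg: "\<And>n. 1 < \<tau> (Suc n) * (lv n * (1 + \<tau> n))"
  and dmono: "incseq (\<lambda>k. lv k / (1 + lv k))" and dlim: "(\<lambda>k. lv k / (1 + lv k)) \<longlonglongrightarrow> \<Phi>"
  and P: "0 < \<Phi>"
  shows "GOOD \<Phi> (1 / (2 + \<tau>s))"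
  unfolding GOOD_def
proof (rule design[where \<tau>=\<tau> and lv=lv and \<gamma>=1 and N=Suc and ai=0 and bi="\<tau> 0/2"
      and gm=gm and \<theta>=0])
  have gg: "\<And>n. gg \<tau> lv 1 Suc n = lv n * (1 + \<tau> n)" by (simp add: gg_def)
  show "\<And>n. 0 < \<tau> n \<and> \<tau> n < 1" by (fact t)
  show "1 < gm" by (fact gm(1))
  show "\<And>n. gm \<le> gg \<tau> lv 1 Suc n" using gm(2) gg by simp
  show "\<And>n. 1 < \<tau> (Suc n) * gg \<tau> lv 1 Suc n" using tg gg by simp
  show "0 \<le> (0::real)" "0 \<le> \<tau> 0/2" "\<tau> 0/2 < \<tau> 0" using t[of 0] by simp_all
  show "strict_mono Suc" "1 \<le> Suc 0" by (simp_all add: strict_mono_Suc_iff)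
  show "\<And>n. Suc n \<notin> range Suc \<Longrightarrow> 1 / (1 + \<tau> n + 1) \<le> (0::real)" by simp
  show "(0::real) < \<Phi>" by (fact P)
  show "incseq (\<lambda>k. lv (Suc k - 1) / (1 + lv (Suc k - 1)))" using dmono by simp
  show "(\<lambda>k. lv (Suc k - 1) / (1 + lv (Suc k - 1))) \<longlonglongrightarrow> \<Phi>" using dlim by simp
  have ts: "0 \<le> \<tau>s" using tlim by (rule LIMSEQ_le_const) (use t in \<open>auto intro: less_imp_le\<close>)
  have "(\<lambda>k. 1 / (1 + (1 + \<tau> (Suc k)))) \<longlonglongrightarrow> 1 / (1 + (1 + \<tau>s))"
    using ts by (intro tendsto_intros LIMSEQ_Suc[OF tlim]) auto
  then show "(\<lambda>k. 1 / (1 + (1 + \<tau> (Suc (Suc k) - 1)) * 1 ^ (Suc (Suc k) - Suc k - 1))) \<longlonglongrightarrow> 1 / (2 + \<tau>s)"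
    by (simp add: add.assoc[symmetric])
qed

lemma incseq_constI: "incseq (\<lambda>k. c :: real)" by (simp add: mono_def)

lemma caseA1:
  fixes L lh :: real
  assumes L: "1/2 < L" and lh: "1/2 < lh" "lh < 1" and c: "lh^2 \<le> L * (1 - lh)"
  shows "GOOD (L/(1+L)) (lh/(1+lh))"
proof -
  define ts where "ts = (1-lh)/lh"
  have ts: "0 < ts" "ts < 1" using lh by (auto simp: ts_def field_simps)
  have ts1: "1 + ts = 1/lh" using lh by (simp add: ts_def field_simps)
  have key: "1 \<le> L * ts * (1 + ts)"
  proof -
    have "L * ts * (1 + ts) = L * (1 - lh) / lh^2"
      unfolding ts_def using lh by (simp add: field_simps power2_eq_square)
    moreover have "1 \<le> L * (1 - lh) / lh^2"
      using c lh by (subst le_divide_eq_1_pos) auto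
    ultimately show ?thesis by simp
  qed
  define d where "d = (1 - ts)/2"
  define \<tau> where "\<tau> n = ts + d / real (Suc n)" for n
  have d: "0 < d" using ts by (simp add: d_def)
  have tb: "ts < \<tau> n \<and> \<tau> n < 1" for n
  proof -
    have p: "0 < d / real (Suc n)" using d by simp
    have q: "d / real (Suc n) \<le> d" using d by (simp add: divide_simps)
    have r: "ts + d < 1" using ts by (simp add: d_def field_simps)
    have e: "\<tau> n = ts + d / real (Suc n)" by (simp add: \<tau>_def)
    show ?thesis using p q r e by linarith
  qed
  have tlim: "\<tau> \<longlonglongrightarrow> ts"
  proof -
    have "(\<lambda>n. d / real (Suc n)) \<longlonglongrightarrow> 0" using LIMSEQ_Suc[OF lim_const_over_n[of d]] by simp
    then have "(\<lambda>n. ts + d / real (Suc n)) \<longlonglongrightarrow> ts + 0" by (intro tendsto_add tendsto_const)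
    then show ?thesis by (simp add: \<tau>_def[abs_def])
  qed
  have Lp: "0 < L" using L by simp
  have gm: "1 < L * (1 + ts)"
  proof -
    have "L * ts * (1 + ts) < L * 1 * (1 + ts)" using ts Lp by (intro mult_strict_right_mono mult_strict_left_mono) auto
    then show ?thesis using key by simp
  qed
  have G: "GOOD (L/(1+L)) (1 / (2 + ts))"
  proof (rule all_des[where \<tau>=\<tau> and lv="\<lambda>_. L" and gm="L * (1 + ts)"])
    show "\<And>n. 0 < \<tau> n \<and> \<tau> n < 1" using tb ts by (meson less_trans)
    show "\<tau> \<longlonglongrightarrow> ts" by (fact tlim)
    show "1 < L * (1 + ts)" by (fact gm)
    show "\<And>n. L * (1 + ts) \<le> L * (1 + \<tau> n)" using tb Lp by (simp add: less_imp_le)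
    show "\<And>n. 1 < \<tau> (Suc n) * (L * (1 + \<tau> n))"
    proof -
      fix n
      have l1: "L * (1 + ts) < L * (1 + \<tau> n)" using tb[of n] Lp by simp
      have l2: "ts < \<tau> (Suc n)" using tb[of "Suc n"] by simp
      have "ts * (L * (1 + ts)) < \<tau> (Suc n) * (L * (1 + \<tau> n))"
        by (rule mult_strict_mono[OF l2 l1]) (use ts Lp l2 in auto)
      then show "1 < \<tau> (Suc n) * (L * (1 + \<tau> n))" using key by (simp add: mult.assoc mult.left_commute)
    qed
    show "incseq (\<lambda>k. L / (1 + L))" by (rule incseq_constI)
    show "(\<lambda>k. L / (1 + L)) \<longlonglongrightarrow> L / (1 + L)" by simp
    show "0 < L / (1 + L)" using Lp by simp
  qed
  have "1 / (2 + ts) = lh/(1+lh)" using lh by (simp add: ts_def field_simps)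
  then show ?thesis using G by simp
qed

lemma caseA2:
  fixes L :: real
  assumes L: "1/2 < L"
  shows "GOOD (L/(1+L)) ((1/2)/(1+1/2))"
proof -
  define \<delta> where "\<delta> = (2*L-1)/(8*L)"
  have Lp: "0 < L" using L by simp
  have dp: "0 < \<delta>" "\<delta> < 1/4" using L by (auto simp: \<delta>_def field_simps)
  have Ld: "L * \<delta> = (2*L-1)/8" using Lp by (simp add: \<delta>_def field_simps)
  define \<tau> where "\<tau> n = 1 - \<delta> / real (Suc n)" for n
  have tb: "1 - \<delta> \<le> \<tau> n \<and> \<tau> n < 1 \<and> 0 < \<tau> n" for n
  proof -
    have "0 < \<delta> / real (Suc n)" using dp by simp
    moreover have "\<delta> / real (Suc n) \<le> \<delta>" using dp by (simp add: divide_simps)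
    ultimately show ?thesis using dp by (simp add: \<tau>_def)
  qed
  have tlim: "\<tau> \<longlonglongrightarrow> 1"
  proof -
    have "(\<lambda>n. \<delta> / real (Suc n)) \<longlonglongrightarrow> 0" using LIMSEQ_Suc[OF lim_const_over_n[of \<delta>]] by simp
    then have "(\<lambda>n. 1 - \<delta> / real (Suc n)) \<longlonglongrightarrow> 1 - 0" by (intro tendsto_diff tendsto_const)
    then show ?thesis by (simp add: \<tau>_def[abs_def])
  qed
  have G: "GOOD (L/(1+L)) (1 / (2 + 1))"
  proof (rule all_des[where \<tau>=\<tau> and lv="\<lambda>_. L" and gm="L * (2 - \<delta>)"])
    show "\<And>n. 0 < \<tau> n \<and> \<tau> n < 1" using tb by simp
    show "\<tau> \<longlonglongrightarrow> 1" by (fact tlim)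
    show "1 < L * (2 - \<delta>)" using Ld L by (simp add: algebra_simps)
    show "\<And>n. L * (2 - \<delta>) \<le> L * (1 + \<tau> n)" using tb Lp by (simp add: mult_left_mono)
    show "\<And>n. 1 < \<tau> (Suc n) * (L * (1 + \<tau> n))"
    proof -
      fix n
      have "(1 - \<delta>) * (L * (2 - \<delta>)) \<le> \<tau> (Suc n) * (L * (1 + \<tau> n))"
        using tb[of "Suc n"] tb[of n] dp Lp by (intro mult_mono) (auto intro: mult_left_mono)
      moreover have "(1 - \<delta>) * (L * (2 - \<delta>)) = 2*L - 3 * (L * \<delta>) + (L * \<delta>) * \<delta>"
        by (simp add: algebra_simps)
      moreover have "0 \<le> (L * \<delta>) * \<delta>" using dp Lp by simp
      ultimately have e1: "2*L - 3*(L*\<delta>) \<le> \<tau> (Suc n) * (L * (1 + \<tau> n))" by linarith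
      have e2: "1 < 2*L - 3*(L*\<delta>)" unfolding Ld using L by (simp add: field_simps)
      show "1 < \<tau> (Suc n) * (L * (1 + \<tau> n))" using e1 e2 by linarith
    qed
    show "incseq (\<lambda>k. L / (1 + L))" by (rule incseq_constI)
    show "(\<lambda>k. L / (1 + L)) \<longlonglongrightarrow> L / (1 + L)" by simp
    show "0 < L / (1 + L)" using Lp by simp
  qed
  then show ?thesis by simp
qed

lemma tau_choice:
  fixes L c :: real
  assumes L: "1/2 < L" and c: "c < 1"
  shows "\<exists>\<tau>. 0 < \<tau> \<and> \<tau> < 1 \<and> c < \<tau> \<and> 1 < L * \<tau>^2 * (1+\<tau>)"
proof -
  define u where "u = 1/(2*L)"
  have u: "0 < u" "u < 1" using L by (auto simp: u_def field_simps)
  define r where "r = root 3 u"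
  have r: "0 < r" "r < 1" "r^3 = u" using u by (simp_all add: r_def real_root_gt_zero)
  define \<tau> where "\<tau> = (1 + max r c)/2"
  have t: "0 < \<tau>" "\<tau> < 1" "c < \<tau>" "r < \<tau>" using r c by (auto simp: \<tau>_def max_def)
  have t3: "u < \<tau>^3" using power_strict_mono[OF t(4), of 3] r by simp
  have "2 * \<tau>^3 < \<tau>^2 * (1+\<tau>)"
  proof -
    have "0 < \<tau>^2 * (1 - \<tau>)" using t by simp
    then show ?thesis by (simp add: algebra_simps power2_eq_square power3_eq_cube)
  qed
  then have "2 * u < \<tau>^2 * (1+\<tau>)" using t3 by linarith
  then have "1 < L * (\<tau>^2 * (1+\<tau>))" using L by (simp add: u_def field_simps)
  then show ?thesis using t by (intro exI[of _ \<tau>]) (simp add: mult.assoc)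
qed

lemma caseB:
  fixes L lh :: real
  assumes L: "1/2 < L" and lh: "0 < lh" "lh < 1/2"
  shows "GOOD (L/(1+L)) (lh/(1+lh))"
proof -
  define X where "X = 1/lh"
  have X: "2 < X" using lh by (simp add: X_def field_simps)
  have c1: "1/(X-1) < 1" using X by (simp add: divide_simps)
  obtain \<tau> where t: "0 < \<tau>" "\<tau> < 1" "1/(X-1) < \<tau>" "1 < L * \<tau>^2 * (1+\<tau>)"
    using tau_choice[OF L c1] by blast
  have Lp: "0 < L" using L by simp
  define H where "H = L * (1 + \<tau>)"
  define Y where "Y = X / (1 + \<tau>)"
  have tX: "1 < \<tau> * (X - 1)" using t(3) X by (simp add: divide_simps mult.commute)
  have Y: "1/\<tau> < Y" using tX t by (simp add: Y_def divide_simps algebra_simps)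
  have it: "1 < 1/\<tau>" using t by simp
  have Yp: "0 < Y" using Y it by linarith
  have H2: "(1/\<tau>)^2 < H" using t(4) t(1) by (simp add: H_def divide_simps power2_eq_square mult.commute mult.left_commute)
  have H1: "1 < H"
  proof -
    have "1 < (1/\<tau>)^2" using it by (simp add: one_less_power)
    then show ?thesis using H2 by linarith
  qed
  have ex: "\<exists>j. Y < H^j" using real_arch_pow[OF H1] .
  define j where "j = (LEAST j. Y < H^j)"
  have jY: "Y < H^j" unfolding j_def using ex by (rule LeastI_ex)
  have j0: "j \<noteq> 0"
  proof
    assume "j = 0" then show False using jY Y it by simp
  qed
  have low: "(1/\<tau>)^j < Y"
  proof (cases "j = 1")
    case True then show ?thesis using Y by simp
  next
    case False
    then have j2: "2 \<le> j" using j0 by simp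
    have "\<not> Y < H^(j-1)"
    proof
      assume "Y < H^(j-1)"
      then have "j \<le> j - 1" unfolding j_def by (rule Least_le)
      then show False using j0 by simp
    qed
    then have hy: "H^(j-1) \<le> Y" by simp
    have "(1/\<tau>)^j \<le> (1/\<tau>)^(2*(j-1))" using it j2 by (intro power_increasing) auto
    also have "\<dots> = ((1/\<tau>)^2)^(j-1)" by (simp add: power_mult)
    also have "\<dots> < H^(j-1)" using H2 j2 by (intro power_strict_mono) auto
    finally show ?thesis using hy by linarith
  qed
  define \<gamma> where "\<gamma> = root j Y"
  have gj: "\<gamma>^j = Y" using j0 Yp by (simp add: \<gamma>_def)
  have gp: "0 \<le> \<gamma>" unfolding \<gamma>_def using Yp by (intro real_root_ge_zero) simp
  have gH: "\<gamma> < H" using jY gj H1 by (intro power_less_imp_less_base[of \<gamma> j H]) auto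
  have gt: "1/\<tau> < \<gamma>" using low gj gp by (intro power_less_imp_less_base[of "1/\<tau>" j \<gamma>]) auto
  define N where "N k = Suc j * Suc k" for k
  have Nm: "strict_mono N" unfolding N_def by (rule strict_monoI) (rule mult_less_mono2, simp_all)
  have gap: "N (Suc k) - Suc (N k) = j" for k by (simp add: N_def)
  show ?thesis
  proof (rule fill_des[where \<tau>=\<tau> and \<gamma>=\<gamma> and lv="\<lambda>_. L" and N=N])
    show "0 < \<tau>" "\<tau> < 1" by (fact t(1), fact t(2))
    show "1 < \<tau> * \<gamma>" using gt t by (simp add: divide_simps mult.commute)
    show "\<And>n. 1 < \<tau> * (L * (1 + \<tau>))"
    proof -
      fix n
      have "\<tau>^2 * (L * (1+\<tau>)) \<le> \<tau> * (L * (1+\<tau>))"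
        using t Lp by (intro mult_right_mono) (auto simp: power2_eq_square)
      moreover have "L * \<tau>^2 * (1+\<tau>) = \<tau>^2 * (L * (1+\<tau>))" by (simp add: algebra_simps)
      ultimately show "1 < \<tau> * (L * (1 + \<tau>))" using t(4) by linarith
    qed
    show "strict_mono N" by (fact Nm)
    show "1 \<le> N 0" by (simp add: N_def)
    show "\<gamma> / (1 + \<tau> + \<gamma>) < L / (1 + L)"
      using gH t gp Lp by (simp add: H_def divide_simps algebra_simps)
    show "incseq (\<lambda>k. L / (1 + L))" by (rule incseq_constI)
    show "(\<lambda>k. L / (1 + L)) \<longlonglongrightarrow> L / (1 + L)" by simp
    have tY: "(1 + \<tau>) * Y = X" using t by (simp add: Y_def)
    have "1 / (1 + X) = lh / (1 + lh)" using lh by (simp add: X_def field_simps)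
    then have "1 / (1 + (1 + \<tau>) * Y) = lh / (1 + lh)" using tY by simp
    then show "(\<lambda>k. 1 / (1 + (1 + \<tau>) * \<gamma> ^ (N (Suc k) - N k - 1))) \<longlonglongrightarrow> lh / (1 + lh)"
      by (simp add: gap gj)
  qed
qed

lemma caseC:
  fixes L :: real
  assumes L: "1/2 < L"
  shows "GOOD (L/(1+L)) 0"
proof -
  obtain \<tau> where t: "0 < \<tau>" "\<tau> < 1" "1 < L * \<tau>^2 * (1+\<tau>)"
    using tau_choice[OF L, of 0] by auto
  have Lp: "0 < L" using L by simp
  have tl: "1 < \<tau> * (L * (1 + \<tau>))"
  proof -
    have "\<tau>^2 * (L * (1+\<tau>)) \<le> \<tau> * (L * (1+\<tau>))"
      using t Lp by (intro mult_right_mono) (auto simp: power2_eq_square)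
    moreover have "L * \<tau>^2 * (1+\<tau>) = \<tau>^2 * (L * (1+\<tau>))" by (simp add: algebra_simps)
    ultimately show ?thesis using t(3) by linarith
  qed
  have lt: "1/\<tau> < L * (1 + \<tau>)" using tl t by (simp add: divide_simps mult.commute)
  define \<gamma> where "\<gamma> = (1/\<tau> + L * (1 + \<tau>))/2"
  have g: "1/\<tau> < \<gamma>" "\<gamma> < L * (1 + \<tau>)" using lt by (simp_all add: \<gamma>_def)
  have g1: "1 < \<gamma>" using g(1) t by (smt (verit) less_divide_eq_1_pos)
  show ?thesis
  proof (rule fill_des[where \<tau>=\<tau> and \<gamma>=\<gamma> and lv="\<lambda>_. L" and N=tri])
    show "0 < \<tau>" "\<tau> < 1" by (fact t(1), fact t(2))
    show "1 < \<tau> * \<gamma>" using g t by (simp add: divide_simps mult.commute)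
    show "\<And>n. 1 < \<tau> * (L * (1 + \<tau>))" using tl by simp
    show "strict_mono tri" by (rule tri_mono)
    show "1 \<le> tri 0" by simp
    show "\<gamma> / (1 + \<tau> + \<gamma>) < L / (1 + L)"
      using g(2) t g1 Lp by (simp add: divide_simps algebra_simps)
    show "incseq (\<lambda>k. L / (1 + L))" by (rule incseq_constI)
    show "(\<lambda>k. L / (1 + L)) \<longlonglongrightarrow> L / (1 + L)" by simp
    show "(\<lambda>k. 1 / (1 + (1 + \<tau>) * \<gamma> ^ (tri (Suc k) - tri k - 1))) \<longlonglongrightarrow> 0"
      using tri_lim[of \<tau> \<gamma>] t g1 by simp
  qed
qed

lemma caseD:
  fixes lh :: real
  assumes lh: "1/2 \<le> lh" "lh \<le> 1"
  shows "GOOD 1 (lh/(1+lh))"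
proof -
  define ts where "ts = (1-lh)/lh"
  have ts: "0 \<le> ts" "ts \<le> 1" using lh by (auto simp: ts_def field_simps)
  define \<tau> where "\<tau> n = ts + (1/2 - ts) / real (n + 2)" for n
  have te: "\<tau> n = ((real n + 1) * ts + 1/2) / (real n + 2)" for n
    by (simp add: \<tau>_def field_simps)
  have tb: "0 < \<tau> n \<and> \<tau> n < 1 \<and> (1/2) / (real n + 2) \<le> \<tau> n" for n
  proof -
    have a: "0 \<le> (real n + 1) * ts" using ts by simp
    have b: "(real n + 1) * ts \<le> real n + 1" using ts by (simp add: mult_left_le)
    have num: "0 < (real n + 1) * ts + 1/2" "(real n + 1) * ts + 1/2 < real n + 2"
      "1/2 \<le> (real n + 1) * ts + 1/2" using a b by linarith+
    have den: "0 < real n + 2" by simp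
    have "0 < ((real n + 1) * ts + 1/2) / (real n + 2)" using num den by simp
    moreover have "((real n + 1) * ts + 1/2) / (real n + 2) < 1" using num den by simp
    moreover have "(1/2) / (real n + 2) \<le> ((real n + 1) * ts + 1/2) / (real n + 2)"
      using num den by (intro divide_right_mono) auto
    ultimately show ?thesis unfolding te by simp
  qed
  have tlim: "\<tau> \<longlonglongrightarrow> ts"
  proof -
    have "(\<lambda>n. (1/2 - ts) / real (n + 2)) \<longlonglongrightarrow> 0"
      using LIMSEQ_ignore_initial_segment[OF lim_const_over_n[of "1/2 - ts"], of 2] by simp
    then have "(\<lambda>n. ts + (1/2 - ts) / real (n + 2)) \<longlonglongrightarrow> ts + 0" by (intro tendsto_add tendsto_const)
    then show ?thesis by (simp add: \<tau>_def[abs_def])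
  qed
  define lv where "lv n = 4 * (real n + 2)" for n
  have G: "GOOD 1 (1 / (2 + ts))"
  proof (rule all_des[where \<tau>=\<tau> and lv=lv and gm=8])
    show "\<And>n. 0 < \<tau> n \<and> \<tau> n < 1" using tb by simp
    show "\<tau> \<longlonglongrightarrow> ts" by (fact tlim)
    show "1 < (8::real)" by simp
    show "\<And>n. 8 \<le> lv n * (1 + \<tau> n)"
    proof -
      fix n
      have "8 * 1 \<le> lv n * (1 + \<tau> n)" using tb[of n] by (intro mult_mono) (auto simp: lv_def)
      then show "8 \<le> lv n * (1 + \<tau> n)" by simp
    qed
    show "\<And>n. 1 < \<tau> (Suc n) * (lv n * (1 + \<tau> n))"
    proof -
      fix n
      have l1: "lv n \<le> lv n * (1 + \<tau> n)" using tb[of n] by (simp add: lv_def)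
      have "(1/2) / (real (Suc n) + 2) * lv n \<le> \<tau> (Suc n) * (lv n * (1 + \<tau> n))"
        using tb[of "Suc n"] l1 by (intro mult_mono) (auto simp: lv_def)
      moreover have "1 < (1/2) / (real (Suc n) + 2) * lv n" by (simp add: lv_def field_simps)
      ultimately show "1 < \<tau> (Suc n) * (lv n * (1 + \<tau> n))" by linarith
    qed
    show "incseq (\<lambda>k. lv k / (1 + lv k))"
      by (rule ratio_inc) (auto simp: lv_def incseq_def)
    show "(\<lambda>k. lv k / (1 + lv k)) \<longlonglongrightarrow> 1"
    proof (rule ratio_lim)
      show "filterlim lv at_top sequentially"
        by (rule filterlim_at_top_mono[OF filterlim_real_sequentially]) (auto simp: lv_def)
    qed
    show "0 < (1::real)" by simp
  qed
  have "1 / (2 + ts) = lh/(1+lh)" using lh by (simp add: ts_def field_simps)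
  then show ?thesis using G by simp
qed

lemma caseE:
  fixes lh :: real
  assumes lh: "0 < lh" "lh < 1/2"
  shows "GOOD 1 (lh/(1+lh))"
proof -
  define X where "X = 1/lh"
  have X: "2 < X" using lh by (simp add: X_def field_simps)
  define \<tau> where "\<tau> = X / (2 * (X - 1))"
  have t: "0 < \<tau>" "\<tau> < 1" using X by (auto simp: \<tau>_def field_simps)
  define \<gamma> where "\<gamma> = X / (1 + \<tau>)"
  have tg: "1 < \<tau> * \<gamma>"
  proof -
    have "\<tau> * (X - 1) = X/2" using X by (simp add: \<tau>_def field_simps)
    then have "1 + \<tau> < \<tau> * X" using X by (simp add: algebra_simps)
    then show ?thesis using t by (simp add: \<gamma>_def field_simps)
  qed
  have gp: "0 < \<gamma>" using X t by (simp add: \<gamma>_def)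
  define lv where "lv n = real n + 2/\<tau>" for n
  define N where "N k = 2 * Suc k" for k
  show ?thesis
  proof (rule fill_des[where \<tau>=\<tau> and \<gamma>=\<gamma> and lv=lv and N=N])
    show "0 < \<tau>" "\<tau> < 1" by (fact t(1), fact t(2))
    show "1 < \<tau> * \<gamma>" by (fact tg)
    show "\<And>n. 1 < \<tau> * (lv n * (1 + \<tau>))"
    proof -
      fix n
      have "2 \<le> \<tau> * lv n" using t by (simp add: lv_def algebra_simps)
      moreover have "\<tau> * lv n \<le> \<tau> * lv n * (1 + \<tau>)"
        using t \<open>2 \<le> \<tau> * lv n\<close> by (simp add: mult_le_cancel_left1)
      ultimately show "1 < \<tau> * (lv n * (1 + \<tau>))" by (simp add: mult.assoc)
    qed
    show "strict_mono N" by (rule strict_monoI) (simp add: N_def)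
    show "1 \<le> N 0" by (simp add: N_def)
    show "\<gamma> / (1 + \<tau> + \<gamma>) < 1" using t gp by simp
    show "incseq (\<lambda>k. lv (N k - 1) / (1 + lv (N k - 1)))"
      by (rule ratio_inc) (use t in \<open>auto simp: lv_def N_def incseq_def\<close>)
    show "(\<lambda>k. lv (N k - 1) / (1 + lv (N k - 1))) \<longlonglongrightarrow> 1"
    proof (rule ratio_lim)
      show "filterlim (\<lambda>k. lv (N k - 1)) at_top sequentially"
        by (rule filterlim_at_top_mono[OF filterlim_real_sequentially]) (use t in \<open>auto simp: lv_def N_def\<close>)
    qed
    have tgX: "(1 + \<tau>) * \<gamma> = X" using t by (simp add: \<gamma>_def)
    have "1 / (1 + X) = lh / (1 + lh)" using lh by (simp add: X_def field_simps)
    then have "1 / (1 + (1 + \<tau>) * \<gamma>) = lh / (1 + lh)" using tgX by simp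
    then show "(\<lambda>k. 1 / (1 + (1 + \<tau>) * \<gamma> ^ (N (Suc k) - N k - 1))) \<longlonglongrightarrow> lh / (1 + lh)"
      by (simp add: N_def)
  qed
qed

lemma tri_ge: "Suc k \<le> tri k" by (induction k) auto

lemma caseF: "GOOD 1 0"
proof -
  define lv where "lv n = real n + 4" for n
  show ?thesis
  proof (rule fill_des[where \<tau>="1/2" and \<gamma>=3 and lv=lv and N=tri])
    show "0 < (1/2::real)" "(1/2::real) < 1" by simp_all
    show "1 < (1/2::real) * 3" by simp
    show "\<And>n. 1 < 1 / 2 * (lv n * (1 + 1 / 2))" by (simp add: lv_def)
    show "strict_mono tri" by (rule tri_mono)
    show "1 \<le> tri 0" by simp
    show "3 / (1 + 1 / 2 + 3) < (1::real)" by simp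
    show "incseq (\<lambda>k. lv (tri k - 1) / (1 + lv (tri k - 1)))"
    proof (rule ratio_inc)
      show "incseq (\<lambda>k. lv (tri k - 1))"
        unfolding incseq_def lv_def
        using tri_mono by (auto simp: strict_mono_less_eq diff_le_mono)
    qed (simp add: lv_def)
    show "(\<lambda>k. lv (tri k - 1) / (1 + lv (tri k - 1))) \<longlonglongrightarrow> 1"
    proof (rule ratio_lim)
      show "filterlim (\<lambda>k. lv (tri k - 1)) at_top sequentially"
      proof (rule filterlim_at_top_mono[OF filterlim_real_sequentially])
        show "eventually (\<lambda>k. real k \<le> lv (tri k - 1)) sequentially"
        proof (rule always_eventually, rule allI)
          fix k
          have "k \<le> tri k - 1" using tri_ge[of k] by simp
          then show "real k \<le> lv (tri k - 1)" by (simp add: lv_def)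
        qed
      qed
    qed
    show "(\<lambda>k. 1 / (1 + (1 + 1/2) * 3 ^ (tri (Suc k) - tri k - 1))) \<longlonglongrightarrow> (0::real)"
      using tri_lim[of "1/2" 3] by simp
  qed
qed

theorem mainTheorem10:
  fixes lh :: real and l :: ereal
  assumes "0 \<le> lh" "lh \<le> 1" "ereal (1/2) < l"
    and "(lh < 1 \<and> ereal (lh^2 / (1 - lh)) \<le> l) \<or> (lh = 1 \<and> l = \<infinity>)"
  shows "\<exists>q0 P1 P2 P3. q0 \<ge> 0 \<and> three_system q0 P1 P2 P3 \<and>
           filterlim P1 at_top at_top \<and>
           infinite (switch_pts q0 P3) \<and>
           phibar P3 = (if l = \<infinity> then 1 else ereal (real_of_ereal l / (1 + real_of_ereal l))) \<and>
           has_kappa q0 P3 (ereal (lh / (1 + lh)))"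
proof -
  consider (fin) L where "l = ereal L" | (pinf) "l = \<infinity>" | (minf) "l = -\<infinity>" by (cases l) auto
  then show ?thesis
  proof cases
    case fin
    have L: "1/2 < L" using assms(3) fin by simp
    have lh1: "lh < 1" and c0: "lh^2/(1-lh) \<le> L" using assms(4) fin by auto
    have c: "lh^2 \<le> L*(1-lh)" using c0 lh1 by (simp add: pos_divide_le_eq)
    have G: "GOOD (L/(1+L)) (lh/(1+lh))"
    proof -
      consider "lh = 0" | "0 < lh \<and> lh < 1/2" | "lh = 1/2" | "1/2 < lh" using assms(1) by linarith
      then show ?thesis
      proof cases
        case 1 then show ?thesis using caseC[OF L] by simp
      next
        case 2 then show ?thesis using caseB[OF L] by simp
      next
        case 3
        then have e: "lh/(1+lh) = (1/2)/(1+1/2)" by simp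
        show ?thesis unfolding e by (rule caseA2[OF L])
      next
        case 4 then show ?thesis using caseA1[OF L 4 lh1 c] by simp
      qed
    qed
    have eq: "(if l = \<infinity> then 1 else ereal (real_of_ereal l / (1 + real_of_ereal l))) = ereal (L/(1+L))"
      using fin by simp
    show ?thesis unfolding eq by (rule G[unfolded GOOD_def])
  next
    case pinf
    have G: "GOOD 1 (lh/(1+lh))"
    proof -
      consider "lh = 0" | "0 < lh \<and> lh < 1/2" | "1/2 \<le> lh" using assms(1) by linarith
      then show ?thesis
      proof cases
        case 1 then show ?thesis using caseF by simp
      next
        case 2 then show ?thesis using caseE by simp
      next
        case 3 then show ?thesis using caseD[OF 3 assms(2)] by simp
      qed
    qed
    have eq: "(if l = \<infinity> then 1 else ereal (real_of_ereal l / (1 + real_of_ereal l))) = ereal 1"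
      using pinf by simp
    show ?thesis unfolding eq by (rule G[unfolded GOOD_def])
  next
    case minf
    then show ?thesis using assms(3) by simp
  qed
qed

end
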